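(* Let $S_1,S_2\subset[n]$ be two disjoint nonempty subsets with $|S_1|=s_1$ and $|S_2|=s_2$, and let $s=s_1+s_2$, where $n/s$ is a positive integer. For $i\in\{1,2\}$, let $S_{i^c}$ denote the other set in $\{S_1,S_2\}$. Consider performing $t_i$ independent trials, each of which samples $n/s$ items uniformly without replacement from $[n]$. Given $\epsilon_i>0$, if $t_i\ge \frac{e^5}{4\pi^2}\log\frac{1}{\epsilon_i}\cdot\frac{s}{s_i}$, then with probability at least $1-\epsilon_i$ there exists a trial (among the $t_i$ performed) whose sampled set contains exactly one item from $S_i$ and no item from $S_{i^c}$.
   Context: $\log$ denotes the natural logarithm. *)

theory Defs
  imports Complex_Main "HOL-Probability.Probability"
begin

definition trial_pmf :: "nat \<Rightarrow> nat \<Rightarrow> nat set pmf" where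
  "trial_pmf n k = pmf_of_set {A. A \<subseteq> {1..n} \<and> card A = k}"

definition trials_pmf :: "nat \<Rightarrow> nat \<Rightarrow> nat \<Rightarrow> (nat \<Rightarrow> nat set) pmf" where
  "trials_pmf t n k = Pi_pmf {..<t} {} (\<lambda>_. trial_pmf n k)"

end

theory Submission imports Defs begin
lemma binom_step:
  fixes N r s :: nat
  assumes "r * s + 1 \<le> N" "s > 0"
  shows "real ((N-1) choose r) \<ge> (1 - 1/real s) * real (N choose r)"
proof -
  have e: "real (N - r) * real (N choose r) = real N * real ((N-1) choose r)"
    using binomial_absorb_comp[of N r] by (metis of_nat_mult)
  have Nr: "r \<le> N" using assms by (metis add_leD1 le_trans mult_le_mono2 nat_mult_1_right Suc_le_eq less_imp_le_nat One_nat_def Suc_leI)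
  have "real r * real s + 1 \<le> real N" using assms by (metis of_nat_1 of_nat_add of_nat_le_iff of_nat_mult)
  hence h: "(1 - 1/real s) * real N \<le> real (N - r)" using assms Nr
    by (simp add: field_simps of_nat_diff)
  have Npos: "real N > 0" using assms by simp
  have "(1 - 1/real s) * real (N choose r) * real N \<le> real (N - r) * real (N choose r)"
    using mult_right_mono[OF h, of "real (N choose r)"] by (simp add: algebra_simps)
  also have "\<dots> = real ((N-1) choose r) * real N" using e by simp
  finally show ?thesis using Npos by (metis mult_le_cancel_right_pos)
qed

lemma binom_iter:
  fixes n r s d :: nat
  assumes "n = (r+1) * s" "s > 0" "d \<le> s - 1"
  shows "real ((n-1-d) choose r) \<ge> (1 - 1/real s)^d * real ((n-1) choose r)"
  using assms(3)
proof (induction d)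
  case 0 then show ?case by simp
next
  case (Suc d)
  have IH: "real ((n-1-d) choose r) \<ge> (1 - 1/real s)^d * real ((n-1) choose r)"
    using Suc by simp
  have "r * s + 1 \<le> n - 1 - d" using Suc.prems assms(1,2) by (simp add: algebra_simps)
  from binom_step[OF this assms(2)]
  have "real ((n-1-d-1) choose r) \<ge> (1 - 1/real s) * real ((n-1-d) choose r)" .
  moreover have "(1 - 1/real s) \<ge> 0" using assms(2) by (simp add: field_simps)
  ultimately have "real ((n-1-d-1) choose r) \<ge> (1 - 1/real s) * ((1 - 1/real s)^d * real ((n-1) choose r))"
    using IH by (meson mult_left_mono order_trans)
  moreover have "n-1-d-1 = n-1-Suc d" by simp
  ultimately show ?case by simp
qed

lemma pow_bound:
  fixes s :: nat assumes "s \<ge> 2"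
  shows "(1 - 1/real s)^(s-1) \<ge> exp (-1)"
proof -
  define m where "m = real (s - 1)"
  have m: "m \<ge> 1" "real s = m + 1" using assms by (auto simp: m_def of_nat_diff)
  have "exp (1/m) \<ge> 1 + 1/m" by (rule exp_ge_add_one_self)
  hence "1 / exp (1/m) \<le> 1 / (1 + 1/m)" proof (rule divide_left_mono)
    have "1/m > 0" using m by simp
    hence "1 + 1/m > 0" by linarith
    thus "0 < exp (1/m) * (1 + 1/m)" by (intro mult_pos_pos) auto
  qed simp
  also have "1/(1+1/m) = 1 - 1/real s" using m by (simp add: field_simps)
  finally have b: "exp (-(1/m)) \<le> 1 - 1/real s" by (simp add: exp_minus field_simps)
  have "exp (-1) = exp (-(1/m)) ^ (s-1)"
    using m by (simp add: exp_of_nat_mult[symmetric] m_def)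
  also have "\<dots> \<le> (1 - 1/real s)^(s-1)" by (rule power_mono[OF b]) simp
  finally show ?thesis .
qed

lemma const_bound: "exp 1 \<le> exp 5 / (4 * pi^2)"
proof -
  have e: "exp (1::real) \<ge> 2.7" using e_approx_32 by (simp add: abs_if split: if_splits)
  have "exp (4::real) = exp 1 ^ 4" by (simp add: exp_of_nat_mult[symmetric])
  also have "\<dots> \<ge> 2.7^4" using e by (intro power_mono) auto
  finally have e4: "exp (4::real) \<ge> 2.7^4" .
  have "pi^2 \<le> 3.2^2" using pi_approx by (intro power_mono) auto
  moreover have "4 * (3.2::real)^2 \<le> 2.7^4" by (simp add: power2_eq_square power4_eq_xxxx)
  ultimately have "4 * pi^2 \<le> exp 4" using e4 by linarith
  hence "exp 1 * (4 * pi^2) \<le> exp 1 * exp 4" by simp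
  also have "\<dots> = exp 5" by (simp add: exp_add[symmetric])
  finally show ?thesis by (simp add: field_simps)
qed

lemma count_good:
  fixes n k :: nat and A B :: "nat set"
  assumes "A \<subseteq> {1..n}" "B \<subseteq> {1..n}" "A \<inter> B = {}" "k \<ge> 1"
  shows "card ({X. X \<subseteq> {1..n} \<and> card X = k} \<inter> {X. card (X \<inter> A) = 1 \<and> X \<inter> B = {}})
         = card A * ((n - (card A + card B)) choose (k - 1))"
proof -
  define R where "R = {1..n} - (A \<union> B)"
  define Ys where "Ys = {Y. Y \<subseteq> R \<and> card Y = k - 1}"
  have fA: "finite A" "finite B" using assms finite_subset by blast+
  have cR: "card R = n - (card A + card B)"
    unfolding R_def using assms fA
    by (subst card_Diff_subset) (auto simp: card_Un_disjoint)
  have eq: "{X. X \<subseteq> {1..n} \<and> card X = k} \<inter> {X. card (X \<inter> A) = 1 \<and> X \<inter> B = {}}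
        = (\<lambda>(x,Y). insert x Y) ` (A \<times> Ys)"
  proof (intro equalityI subsetI)
    fix X assume X: "X \<in> {X. X \<subseteq> {1..n} \<and> card X = k} \<inter> {X. card (X \<inter> A) = 1 \<and> X \<inter> B = {}}"
    then obtain x where x: "X \<inter> A = {x}" by (auto simp: card_1_singleton_iff)
    have fX: "finite X" using X finite_subset by auto
    have xX: "x \<in> X" "x \<in> A" using x by auto
    have "X - {x} \<in> Ys" unfolding Ys_def R_def using X x fX xX
      by (auto simp: card_Diff_singleton)
    moreover have "X = insert x (X - {x})" using xX by auto
    ultimately show "X \<in> (\<lambda>(x,Y). insert x Y) ` (A \<times> Ys)" using xX by blast
  next
    fix X assume "X \<in> (\<lambda>(x,Y). insert x Y) ` (A \<times> Ys)"
    then obtain x Y where X: "X = insert x Y" "x \<in> A" "Y \<subseteq> R" "card Y = k - 1"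
      unfolding Ys_def by auto
    have fY: "finite Y" using X(3) R_def finite_subset by blast
    have xY: "x \<notin> Y" using X R_def by auto
    have "card X = k" using X fY xY assms(4) by simp
    moreover have "X \<subseteq> {1..n}" using X assms R_def by auto
    moreover have "X \<inter> A = {x}" using X R_def by auto
    moreover have "X \<inter> B = {}" using X R_def assms(3) by auto
    ultimately show "X \<in> {X. X \<subseteq> {1..n} \<and> card X = k} \<inter> {X. card (X \<inter> A) = 1 \<and> X \<inter> B = {}}"
      by auto
  qed
  have inj: "inj_on (\<lambda>(x,Y). insert x Y) (A \<times> Ys)"
  proof (rule inj_onI, clarify)
    fix x Y x' Y' assume h: "x \<in> A" "Y \<in> Ys" "x' \<in> A" "Y' \<in> Ys" "insert x Y = insert x' Y'"
    have d: "Y \<inter> A = {}" "Y' \<inter> A = {}" using h(2,4) unfolding Ys_def R_def by auto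
    have "insert x Y \<inter> A = {x}" "insert x' Y' \<inter> A = {x'}" using h d by auto
    hence "x = x'" using h(5) by auto
    moreover have "Y = insert x Y - {x}" "Y' = insert x' Y' - {x'}" using d h by auto
    ultimately show "x = x' \<and> Y = Y'" using h(5) by metis
  qed
  have fR: "finite R" unfolding R_def by simp
  have "card Ys = card R choose (k-1)" unfolding Ys_def using n_subsets[OF fR] by simp
  thus ?thesis unfolding eq using card_image[OF inj] cR by (simp add: card_cartesian_product)
qed

lemma single_prob:
  fixes n s k :: nat and A B :: "nat set"
  assumes "A \<subseteq> {1..n}" "B \<subseteq> {1..n}" "A \<inter> B = {}" "A \<noteq> {}" "B \<noteq> {}"
    "s = card A + card B" "n = k * s"
  shows "measure_pmf.prob (trial_pmf n k) {X. card (X \<inter> A) = 1 \<and> X \<inter> B = {}}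
          \<ge> real (card A) * exp (-1) / real s"
proof -
  have fA: "finite A" "finite B" using assms finite_subset by blast+
  have a1: "card A \<ge> 1" "card B \<ge> 1" using fA assms by (auto simp: Suc_le_eq card_gt_0_iff)
  have s2: "s \<ge> 2" using a1 assms by simp
  have "n > 0" using assms(1,4) by auto
  hence k1: "k \<ge> 1" using assms(7) by (cases k) auto
  define r where "r = k - 1"
  have nr: "n = (r+1) * s" using k1 assms(7) r_def by simp
  define U where "U = {X. X \<subseteq> {1..n} \<and> card X = k}"
  have cU: "card U = n choose k" unfolding U_def using n_subsets[of "{1..n}" k] by simp
  have kn: "k \<le> n" using assms(7) s2 by simp
  have Une: "U \<noteq> {}" using cU kn by (metis card.empty zero_less_binomial_iff less_irrefl)
  have fU: "finite U" unfolding U_def by (rule finite_subset[of _ "Pow {1..n}"]) auto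
  have p: "measure_pmf.prob (trial_pmf n k) {X. card (X \<inter> A) = 1 \<and> X \<inter> B = {}}
      = real (card A * ((n - s) choose r)) / real (n choose k)"
  proof -
    have "trial_pmf n k = pmf_of_set U" unfolding trial_pmf_def U_def ..
    hence "measure_pmf.prob (trial_pmf n k) {X. card (X \<inter> A) = 1 \<and> X \<inter> B = {}}
      = real (card (U \<inter> {X. card (X \<inter> A) = 1 \<and> X \<inter> B = {}})) / real (card U)"
      using measure_pmf_of_set[OF Une fU] by simp
    also have "card (U \<inter> {X. card (X \<inter> A) = 1 \<and> X \<inter> B = {}}) = card A * ((n - s) choose r)"
      unfolding U_def using count_good[OF assms(1-3) k1] by (simp add: assms(6) r_def)
    finally show ?thesis using cU by simp
  qed
  have s0: "0 < s" using s2 by simp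
  have b1: "real ((n-1-(s-1)) choose r) \<ge> (1 - 1/real s)^(s-1) * real ((n-1) choose r)"
    using binom_iter[OF nr s0 order_refl] .
  have nn: "n - 1 - (s-1) = n - s" using s2 by simp
  have b2: "real ((n-s) choose r) \<ge> exp (-1) * real ((n-1) choose r)"
  proof -
    have "exp (-1) * real ((n-1) choose r) \<le> (1 - 1/real s)^(s-1) * real ((n-1) choose r)"
      by (rule mult_right_mono[OF pow_bound[OF s2]]) simp
    thus ?thesis using b1 unfolding nn by linarith
  qed
  have b3n: "k * (n choose k) = n * ((n-1) choose r)"
    using times_binomial_minus1_eq[of k n] k1 unfolding r_def by simp
  have b3: "real k * real (n choose k) = real n * real ((n-1) choose r)"
    unfolding of_nat_mult[symmetric] b3n ..
  hence b4: "real (n choose k) = real s * real ((n-1) choose r)"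
    using assms(7) k1 by (simp add: field_simps)
  have pos: "real (n choose k) > 0" using kn by simp
  have "real (card A) * exp (-1) / real s * real (n choose k)
      = real (card A) * (exp (-1) * real ((n-1) choose r))" using b4 s2 by (simp add: field_simps)
  also have "\<dots> \<le> real (card A) * real ((n-s) choose r)" using b2 by (simp add: mult_left_mono)
  finally have "real (card A) * exp (-1) / real s \<le> real (card A) * real ((n-s) choose r) / real (n choose k)"
    using pos by (simp add: field_simps)
  thus ?thesis using p by simp
qed

theorem lemma1:
  fixes n s1 s2 s i t :: nat and S1 S2 :: "nat set" and \<epsilon> :: real
  assumes "S1 \<subseteq> {1..n}" and "S2 \<subseteq> {1..n}" and "S1 \<inter> S2 = {}"
    and "S1 \<noteq> {}" and "S2 \<noteq> {}"
    and "card S1 = s1" and "card S2 = s2" and "s = s1 + s2"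
    and "s dvd n"
    and "i \<in> {1, 2}"
    and "\<epsilon> > 0"
    and "real t \<ge> exp 5 / (4 * pi\<^sup>2) * ln (1 / \<epsilon>) *
           (real s / real (if i = 1 then s1 else s2))"
  shows "measure_pmf.prob (trials_pmf t n (n div s))
           {T. \<exists>j<t. card (T j \<inter> (if i = 1 then S1 else S2)) = 1
                    \<and> T j \<inter> (if i = 1 then S2 else S1) = {}} \<ge> 1 - \<epsilon>"
proof -
  define A where "A = (if i = 1 then S1 else S2)"
  define B where "B = (if i = 1 then S2 else S1)"
  define k where "k = n div s"
  have AB: "A \<subseteq> {1..n}" "B \<subseteq> {1..n}" "A \<inter> B = {}" "A \<noteq> {}" "B \<noteq> {}"
    "s = card A + card B"
    using assms unfolding A_def B_def by auto
  have ca: "real (if i = 1 then s1 else s2) = real (card A)" using assms A_def by simp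
  have fA: "finite A" using AB finite_subset by blast
  have apos: "real (card A) > 0" using fA AB by (simp add: card_gt_0_iff)
  have spos: "real s > 0" using AB fA apos by simp
  have nks: "n = k * s" using assms(9) k_def by simp
  define G where "G = {X. card (X \<inter> A) = 1 \<and> X \<inter> B = {}}"
  define p where "p = measure_pmf.prob (trial_pmf n k) G"
  have pl: "p \<ge> real (card A) * exp (-1) / real s"
    unfolding p_def G_def by (rule single_prob[OF AB nks])
  have p1: "p \<le> 1" unfolding p_def by simp
  have E: "{T. \<exists>j<t. card (T j \<inter> A) = 1 \<and> T j \<inter> B = {}} = UNIV - Pi {..<t} (\<lambda>_. - G)"
    unfolding G_def by auto
  have cG: "measure_pmf.prob (trial_pmf n k) (- G) = 1 - p"
    unfolding p_def using measure_pmf.prob_compl[of G "trial_pmf n k"]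
    by (simp add: Compl_eq_Diff_UNIV)
  have prE: "measure_pmf.prob (trials_pmf t n k) {T. \<exists>j<t. card (T j \<inter> A) = 1 \<and> T j \<inter> B = {}}
      = 1 - (1 - p)^t"
    unfolding E trials_pmf_def
    by (subst measure_pmf.prob_compl[simplified]) (simp_all add: measure_Pi_pmf_Pi cG)
  have "0 \<le> real (card A) * exp (-1) / real s" by simp
  hence p0: "p \<ge> 0" using pl by linarith
  have "(1 - p)^t \<le> \<epsilon>"
  proof (cases "\<epsilon> \<ge> 1")
    case True
    have "(1-p)^t \<le> 1" using p1 p0
      by (intro power_le_one) auto
    then show ?thesis using True by linarith
  next
    case False
    have L: "ln (1/\<epsilon>) > 0" using False assms(11) by simp
    have "(1 - p)^t \<le> exp (-p)^t" using p1 p0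
      by (intro power_mono) (use exp_ge_add_one_self[of "-p"] in auto)
    also have "\<dots> = exp (- (p * real t))" by (simp add: exp_of_nat_mult[symmetric] mult.commute)
    also have "\<dots> \<le> exp (- ln (1/\<epsilon>))"
    proof -
      have "ln (1/\<epsilon>) = exp (-1) * exp 1 * ln (1/\<epsilon>)" by (simp add: exp_minus)
      also have "\<dots> \<le> exp (-1) * (exp 5 / (4 * pi\<^sup>2)) * ln (1/\<epsilon>)"
        using const_bound L by (intro mult_right_mono mult_left_mono) auto
      also have "\<dots> = real (card A) * exp (-1) / real s *
              (exp 5 / (4 * pi\<^sup>2) * ln (1 / \<epsilon>) * (real s / real (card A)))"
        using apos spos by (simp add: field_simps)
      also have "\<dots> \<le> p * real t"
      proof (rule mult_mono[OF pl _ p0])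
        show "exp 5 / (4 * pi\<^sup>2) * ln (1 / \<epsilon>) * (real s / real (card A)) \<le> real t"
          using assms(12) unfolding ca .
        show "0 \<le> exp 5 / (4 * pi\<^sup>2) * ln (1 / \<epsilon>) * (real s / real (card A))"
          using L by (intro mult_nonneg_nonneg divide_nonneg_nonneg) auto
      qed
      finally have "p * real t \<ge> ln (1/\<epsilon>)" .
      thus ?thesis by simp
    qed
    also have "\<dots> = \<epsilon>" using assms(11) by (simp add: exp_minus)
    finally show ?thesis .
  qed
  thus ?thesis using prE unfolding A_def B_def k_def by simp
qed

end
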